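(* Let $n\ge 2$. For $a\in\mathbb{R}^{n-1}$ and $\rho>0$ let $$B(a,\rho)=\begin{pmatrix} I & -a\\ -a^T & a^Ta-\rho^2\end{pmatrix}\in\mathbb{S}^n,$$ where $I$ is the $(n-1)\times(n-1)$ identity. Let $G\subseteq\mathbb{Z}^{n-1}\times(0,1/2]$ be such that $a_1\neq a_2$ for every pair of distinct $(a_1,\rho_1),(a_2,\rho_2)\in G$. Then $B(a_1,\rho_1)+B(a_2,\rho_2)\in\mathbb{S}^n_+$ for every distinct $(a_1,\rho_1),(a_2,\rho_2)\in G$; in particular $\mathcal{B}(G)=\{B(a,\rho):(a,\rho)\in G\}$ satisfies Condition (D).
   Context: $\mathbb{S}^n$ denotes the space of real $n\times n$ symmetric matrices and $\mathbb{S}^n_+$ its cone of positive semidefinite matrices. A set $\mathcal{B}\subseteq\mathbb{S}^n$ satisfies Condition (D) if there exist $\alpha_B>0$ $(B\in\mathcal{B})$ with $\alpha_AA+\alpha_BB\in\mathbb{S}^n_+$ for every distinct pair $A,B\in\mathcal{B}$. *)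

theory Defs
  imports "HOL-Analysis.Analysis"
begin

text \<open>Symmetric n x n real matrices are represented with the finite index type
  'm option, where Some k (k :: 'm) index the first n-1 coordinates and None
  indexes the last coordinate; thus n = CARD('m) + 1 >= 2.\<close>

definition psd :: "real^'k^'k \<Rightarrow> bool" where
  "psd M \<longleftrightarrow> transpose M = M \<and> (\<forall>x. 0 \<le> x \<bullet> (M *v x))"

definition condD :: "(real^'k^'k) set \<Rightarrow> bool" where
  "condD \<B> \<longleftrightarrow> (\<exists>\<alpha>. (\<forall>B\<in>\<B>. \<alpha> B > 0) \<and>
      (\<forall>A\<in>\<B>. \<forall>B\<in>\<B>. A \<noteq> B \<longrightarrow> psd (\<alpha> A *\<^sub>R A + \<alpha> B *\<^sub>R B)))"

definition Bmat :: "real^'m \<Rightarrow> real \<Rightarrow> real^('m::finite option)^('m option)" where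
  "Bmat a \<rho> = (\<chi> i j. case (i, j) of
       (Some k, Some l) \<Rightarrow> (if k = l then 1 else 0)
     | (Some k, None) \<Rightarrow> - (a $ k)
     | (None, Some l) \<Rightarrow> - (a $ l)
     | (None, None) \<Rightarrow> a \<bullet> a - \<rho>\<^sup>2)"

end

theory Submission
  imports Defs
begin

lemma sum_opt: "(\<Sum>i\<in>(UNIV::('m::finite) option set). f i) = f None + (\<Sum>k\<in>UNIV. f (Some k))"
proof -
  have "(\<Sum>i\<in>(UNIV::'m option set). f i) = (\<Sum>i\<in>insert None (range Some). f i)"
    by (simp add: UNIV_option_conv[symmetric])
  also have "\<dots> = f None + (\<Sum>i\<in>range Some. f i)" by (subst sum.insert) auto
  also have "(\<Sum>i\<in>range Some. f i) = (\<Sum>k\<in>UNIV. f (Some k))"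
    by (subst sum.reindex) (auto simp: inj_on_def)
  finally show ?thesis .
qed

lemma qform:
  fixes x :: "real^('m::finite option)" and a :: "real^'m"
  defines "y \<equiv> (\<chi> k. x $ Some k)" and "t \<equiv> x $ None"
  shows "x \<bullet> (Bmat a \<rho> *v x) = (y - t *\<^sub>R a) \<bullet> (y - t *\<^sub>R a) - t^2 * \<rho>^2"
proof -
  have row_some: "(Bmat a \<rho> *v x) $ Some k = y $ k - a $ k * t" for k
  proof -
    have "(Bmat a \<rho> *v x) $ Some k = (\<Sum>j\<in>UNIV. Bmat a \<rho> $ Some k $ j * x $ j)"
      by (simp add: matrix_vector_mult_def)
    also have "\<dots> = - a $ k * t + (\<Sum>l\<in>UNIV. (if k = l then 1 else 0) * y $ l)"
      by (subst sum_opt) (simp add: Bmat_def y_def t_def)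
    also have "(\<lambda>l. (if k = l then 1 else 0) * y $ l) = (\<lambda>l. if k = l then y $ l else 0)" by auto
    also have "- a $ k * t + (\<Sum>l\<in>UNIV. if k = l then y $ l else 0) = y $ k - a $ k * t" by simp
    finally show ?thesis .
  qed
  have row_none: "(Bmat a \<rho> *v x) $ None = (a \<bullet> a - \<rho>^2) * t - a \<bullet> y"
  proof -
    have "(Bmat a \<rho> *v x) $ None = (\<Sum>j\<in>UNIV. Bmat a \<rho> $ None $ j * x $ j)"
      by (simp add: matrix_vector_mult_def)
    also have "\<dots> = (a \<bullet> a - \<rho>^2) * t + (\<Sum>l\<in>UNIV. - a $ l * y $ l)"
      by (subst sum_opt) (simp add: Bmat_def y_def t_def)
    also have "\<dots> = (a \<bullet> a - \<rho>^2) * t - a \<bullet> y"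
      by (simp add: inner_vec_def sum_negf)
    finally show ?thesis .
  qed
  have "x \<bullet> (Bmat a \<rho> *v x) = (\<Sum>i\<in>UNIV. x $ i * (Bmat a \<rho> *v x) $ i)"
    by (simp add: inner_vec_def)
  also have "\<dots> = t * ((a \<bullet> a - \<rho>^2) * t - a \<bullet> y) + (\<Sum>k\<in>UNIV. y $ k * (y $ k - a $ k * t))"
    by (subst sum_opt) (simp only: row_some row_none, simp add: y_def t_def)
  also have "(\<Sum>k\<in>UNIV. y $ k * (y $ k - a $ k * t)) = y \<bullet> y - t * (a \<bullet> y)"
    by (simp add: inner_vec_def algebra_simps sum_subtractf sum_distrib_left)
  finally show ?thesis
    by (simp add: inner_diff_left inner_diff_right inner_commute power2_eq_square algebra_simps)
qed

lemma int_dist: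
  fixes a b :: "real^'m::finite"
  assumes "\<forall>i. a $ i \<in> \<int>" "\<forall>i. b $ i \<in> \<int>" "a \<noteq> b"
  shows "(a - b) \<bullet> (a - b) \<ge> 1"
proof -
  obtain k where k: "a $ k \<noteq> b $ k" using assms(3) by (metis vec_eq_iff)
  have "a $ k - b $ k \<in> \<int>" using assms by auto
  then obtain z where z: "a $ k - b $ k = of_int z" by (auto elim: Ints_cases)
  have "z \<noteq> 0" using k z by auto
  hence "1 \<le> \<bar>z\<bar>" by arith
  hence "1 * 1 \<le> \<bar>z\<bar> * \<bar>z\<bar>" by (intro mult_mono) auto
  hence "1 \<le> z * z" by (simp add: abs_mult_self_eq)
  hence "(of_int z :: real)^2 \<ge> 1" by (simp add: power2_eq_square flip: of_int_mult)
  hence "1 \<le> (a $ k - b $ k)^2" using z by simp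
  also have "\<dots> \<le> (\<Sum>i\<in>UNIV. (a $ i - b $ i)^2)"
    by (rule member_le_sum) auto
  also have "\<dots> = (a - b) \<bullet> (a - b)" by (simp add: inner_vec_def power2_eq_square)
  finally show ?thesis .
qed

lemma Bsym: "transpose (Bmat a r + Bmat b s) = Bmat a r + Bmat b s"
  by (simp add: transpose_def vec_eq_iff Bmat_def split: option.split)

lemma psd_pair:
  fixes a b :: "real^'m::finite"
  assumes "\<forall>i. a $ i \<in> \<int>" "\<forall>i. b $ i \<in> \<int>" "a \<noteq> b"
    and "0 < r" "r \<le> 1/2" "0 < s" "s \<le> 1/2"
  shows "psd (Bmat a r + Bmat b s)"
  unfolding psd_def
proof (intro conjI allI Bsym)
  fix x :: "real^('m option)"
  define y where "y = (\<chi> k. x $ Some k)"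
  define t where "t = x $ None"
  define u where "u = y - t *\<^sub>R a"
  define v where "v = y - t *\<^sub>R b"
  have e: "x \<bullet> ((Bmat a r + Bmat b s) *v x) = x \<bullet> (Bmat a r *v x) + x \<bullet> (Bmat b s *v x)"
    by (simp add: matrix_vector_mult_def inner_vec_def vec_eq_iff sum.distrib algebra_simps)
  have q: "x \<bullet> ((Bmat a r + Bmat b s) *v x) = u \<bullet> u + v \<bullet> v - t^2 * r^2 - t^2 * s^2"
    unfolding e qform u_def v_def y_def t_def by simp
  have uv: "u - v = t *\<^sub>R (b - a)" by (simp add: u_def v_def algebra_simps)
  have "(u - v) \<bullet> (u - v) = t^2 * ((b - a) \<bullet> (b - a))"
    unfolding uv by (simp add: power2_eq_square)
  moreover have "(b - a) \<bullet> (b - a) \<ge> 1" using int_dist[of b a] assms by auto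
  ultimately have "(u - v) \<bullet> (u - v) \<ge> t^2"
    by (metis mult.right_neutral mult_left_mono zero_le_power2)
  moreover have "u \<bullet> u + v \<bullet> v = ((u - v) \<bullet> (u - v) + (u + v) \<bullet> (u + v)) / 2"
    by (simp add: field_simps inner_diff_left inner_diff_right inner_add_left inner_add_right inner_commute)
  moreover have "(u + v) \<bullet> (u + v) \<ge> 0" by simp
  ultimately have "u \<bullet> u + v \<bullet> v \<ge> t^2 / 2" 
  proof -
    assume h1: "t^2 \<le> (u - v) \<bullet> (u - v)" and h2: "u \<bullet> u + v \<bullet> v = ((u - v) \<bullet> (u - v) + (u + v) \<bullet> (u + v)) / 2"
      and h3: "(u + v) \<bullet> (u + v) \<ge> 0"
    have "t^2 \<le> (u - v) \<bullet> (u - v) + (u + v) \<bullet> (u + v)" using h1 h3 by (rule add_increasing2[rotated])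
    then show ?thesis unfolding h2 by (rule divide_right_mono) simp
  qed
  moreover have "r^2 \<le> 1/4" "s^2 \<le> 1/4" using assms power_mono[of r "1/2" 2] power_mono[of s "1/2" 2]
    by (auto simp: power2_eq_square)
  hence "t^2 * r^2 \<le> t^2 * (1/4)" "t^2 * s^2 \<le> t^2 * (1/4)"
    using mult_left_mono[of "r^2" "1/4" "t^2"] mult_left_mono[of "s^2" "1/4" "t^2"] by auto
  ultimately show "0 \<le> x \<bullet> ((Bmat a r + Bmat b s) *v x)" unfolding q by linarith
qed

theorem mainTheorem3:
  fixes G :: "((real^('m::finite)) \<times> real) set"
  assumes G_sub: "\<forall>(a, \<rho>)\<in>G. (\<forall>i. a $ i \<in> \<int>) \<and> 0 < \<rho> \<and> \<rho> \<le> 1/2"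
    and G_dist: "\<forall>p\<in>G. \<forall>q\<in>G. p \<noteq> q \<longrightarrow> fst p \<noteq> fst q"
  shows "(\<forall>p\<in>G. \<forall>q\<in>G. p \<noteq> q \<longrightarrow>
            psd (Bmat (fst p) (snd p) + Bmat (fst q) (snd q)))
         \<and> condD ((\<lambda>(a, \<rho>). Bmat a \<rho>) ` G)"
proof -
  have P: "\<forall>p\<in>G. \<forall>q\<in>G. p \<noteq> q \<longrightarrow>
            psd (Bmat (fst p) (snd p) + Bmat (fst q) (snd q))"
  proof (intro ballI impI)
    fix p q assume "p \<in> G" "q \<in> G" "p \<noteq> q"
    then show "psd (Bmat (fst p) (snd p) + Bmat (fst q) (snd q))"
      using G_sub G_dist by (intro psd_pair) (auto simp: case_prod_beta)
  qed
  have "condD ((\<lambda>(a, \<rho>). Bmat a \<rho>) ` G)"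
    unfolding condD_def
  proof (intro exI[of _ "\<lambda>_. 1"] conjI ballI impI)
    fix A B assume "A \<in> (\<lambda>(a, \<rho>). Bmat a \<rho>) ` G" "B \<in> (\<lambda>(a, \<rho>). Bmat a \<rho>) ` G" "A \<noteq> B"
    then obtain p q where "p \<in> G" "q \<in> G" "A = Bmat (fst p) (snd p)" "B = Bmat (fst q) (snd q)" "p \<noteq> q"
      by (auto simp: case_prod_beta)
    then show "psd ((1::real) *\<^sub>R A + 1 *\<^sub>R B)" using P by simp
  qed simp
  with P show ?thesis by blast
qed

end
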